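(* Let $K=K_0\supset K_1\supset K_2\supset\cdots$ be a module with a decreasing filtration by submodules (with the convention $K_q=K_0$ for $q<0$), and for each integer $r\ge -1$ let $\partial_r:K\to K$ be a linear map with $\partial_r(K_p)\subset K_p$ for all $p$, $\partial_{-1}=0$, and $\partial_r\circ\partial_s=0$ for all $r,s\ge -1$. For $r\ge -1$ and integers $p$ put $Z^r_p=\{x\in K_p:\ \partial_r x\in K_{p+r}\}$. Assume the following property: for all $r\ge 0$ and all $p$, if $x\in Z^r_p$ or $x\in Z^{r-1}_p$, then $\partial_r x-\partial_{r-1}x\in Z^{r-1}_{p+r}$. Then $Z^{r-1}_{p+1}\subset Z^r_p$ for all $r\ge 0$ and all $p\ge 0$.
   Context: The maps $\partial_r$ play the role of varying boundary operators converging in the filtration topology. *)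

theory Defs
  imports Complex_Main
begin

definition Zset :: "(int \<Rightarrow> 'k set) \<Rightarrow> (int \<Rightarrow> 'k \<Rightarrow> 'k) \<Rightarrow> int \<Rightarrow> int \<Rightarrow> 'k set" where
  "Zset F d r p = {x \<in> F p. d r x \<in> F (p + r)}"

end

theory Submission
  imports Defs
begin

theorem mainTheorem2:
  fixes scale :: "'a::comm_ring_1 \<Rightarrow> 'k::ab_group_add \<Rightarrow> 'k"
    and F :: "int \<Rightarrow> 'k set"
    and d :: "int \<Rightarrow> 'k \<Rightarrow> 'k"
  assumes mod: "module scale"
    and F_sub: "\<And>p. module.subspace scale (F p)"
    and F_0: "F 0 = UNIV"
    and F_neg: "\<And>q. q < 0 \<Longrightarrow> F q = F 0"
    and F_dec: "\<And>p. F (p + 1) \<subseteq> F p"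
    and d_lin: "\<And>r. r \<ge> -1 \<Longrightarrow> module_hom scale scale (d r)"
    and d_filt: "\<And>r p. r \<ge> -1 \<Longrightarrow> d r ` F p \<subseteq> F p"
    and d_m1: "d (-1) = (\<lambda>x. 0)"
    and d_sq: "\<And>r s x. r \<ge> -1 \<Longrightarrow> s \<ge> -1 \<Longrightarrow> d r (d s x) = 0"
    and Zprop: "\<And>r p x. r \<ge> 0 \<Longrightarrow> x \<in> Zset F d r p \<or> x \<in> Zset F d (r - 1) p \<Longrightarrow>
                 d r x - d (r - 1) x \<in> Zset F d (r - 1) (p + r)"
  shows "\<And>r p. r \<ge> 0 \<Longrightarrow> p \<ge> 0 \<Longrightarrow> Zset F d (r - 1) (p + 1) \<subseteq> Zset F d r p"
proof -
  fix r p :: int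
  assume r: "r \<ge> 0" and p: "p \<ge> 0"
  show "Zset F d (r - 1) (p + 1) \<subseteq> Zset F d r p"
  proof
    fix x assume x: "x \<in> Zset F d (r - 1) (p + 1)"
    have xF: "x \<in> F (p+1)" and dx: "d (r-1) x \<in> F (p + 1 + (r - 1))"
      using x by (auto simp: Zset_def)
    have "d r x - d (r - 1) x \<in> Zset F d (r - 1) (p + 1 + r)"
      using Zprop[OF r] x by blast
    hence a: "d r x - d (r - 1) x \<in> F (p + r)"
      using F_dec[of "p + r"] by (auto simp: Zset_def algebra_simps)
    have b: "d (r-1) x \<in> F (p + r)" using dx by (simp add: algebra_simps)
    have "(d r x - d (r - 1) x) + d (r-1) x \<in> F (p + r)"
      using module.subspace_add[OF mod F_sub a b] .
    hence "d r x \<in> F (p + r)" by simp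
    moreover have "x \<in> F p" using xF F_dec[of p] by auto
    ultimately show "x \<in> Zset F d r p" by (simp add: Zset_def)
  qed
qed

end
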